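(* Let $\mathbb{E}$ be a finite-dimensional real inner-product space and $\mathcal{C}\subseteq\mathbb{E}$ a compact convex set. Then the nonempty exposed faces of $\mathcal{C}^\circ$ other than $\mathcal{C}^\circ$ itself are precisely the nonempty sets of the form \[ F_{\bar x}:=\{y\in N_{\mathcal{C}}(\bar x) : \langle y,\bar x\rangle=1\} \] as $\bar x$ ranges over $\mathcal{C}$. Moreover, for any such face, $\operatorname{relint}(F_{\bar x})=\{y\in\operatorname{relint}(N_{\mathcal{C}}(\bar x)) : \langle y,\bar x\rangle=1\}$.
   Context: $\mathcal{C}^\circ:=\{y\in\mathbb{E}^*:\langle y,x\rangle\le1\ \forall x\in\mathcal{C}\}$ is the polar. $N_{\mathcal{C}}(\bar x):=\{y\in\mathbb{E}^*:\langle y,x\rangle\le\langle y,\bar x\rangle\ \forall x\in\mathcal{C}\}$ is the normal cone. An exposed face of a convex set $D$ is a set of the form $D\cap H$ for a supporting hyperplane $H$ of $D$. $\operatorname{relint}$ denotes relative interior. *)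

theory Defs
  imports "HOL-Analysis.Analysis"
begin

text \<open>The dual space is identified with the space itself via the inner product.\<close>

definition polar_set :: "'a::euclidean_space set \<Rightarrow> 'a set" where
  "polar_set C = {y. \<forall>x\<in>C. y \<bullet> x \<le> 1}"

definition normal_cone :: "'a::euclidean_space set \<Rightarrow> 'a \<Rightarrow> 'a set" where
  "normal_cone C xbar = {y. \<forall>x\<in>C. y \<bullet> x \<le> y \<bullet> xbar}"

definition polar_face_at :: "'a::euclidean_space set \<Rightarrow> 'a \<Rightarrow> 'a set" where
  "polar_face_at C xbar = {y \<in> normal_cone C xbar. y \<bullet> xbar = 1}"

end

theory Submission
  imports Defs
begin

lemma convex_polar: "convex (polar_set C)"
  unfolding polar_set_def convex_def by (auto simp: inner_add_left intro!: convex_bound_le)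

lemma convex_normal_cone: "convex (normal_cone C xb)"
  unfolding normal_cone_def convex_def by (auto simp: inner_add_left intro!: add_mono mult_left_mono)

lemma face_eq: "xb \<in> C \<Longrightarrow> polar_face_at C xb = polar_set C \<inter> {y. xb \<bullet> y = 1}"
  unfolding polar_face_at_def polar_set_def normal_cone_def
  by (auto simp: inner_commute)

lemma cone_scale:
  assumes "c > 0" shows "scaleR c ` normal_cone C xb = normal_cone C xb"
proof
  show "scaleR c ` normal_cone C xb \<subseteq> normal_cone C xb"
    using assms by (auto simp: normal_cone_def intro: mult_left_mono)
  show "normal_cone C xb \<subseteq> scaleR c ` normal_cone C xb"
  proof
    fix y assume y: "y \<in> normal_cone C xb"
    have "(1/c) *\<^sub>R y \<in> normal_cone C xb"
      using y assms by (auto simp: normal_cone_def divide_right_mono)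
    moreover have "y = c *\<^sub>R ((1/c) *\<^sub>R y)" using assms by simp
    ultimately show "y \<in> scaleR c ` normal_cone C xb" by blast
  qed
qed

lemma relint_scale:
  fixes z :: "'a::euclidean_space"
  assumes "c > 0" "z \<in> rel_interior (normal_cone C xb)"
  shows "c *\<^sub>R z \<in> rel_interior (normal_cone C xb)"
proof -
  have "rel_interior (scaleR c ` normal_cone C xb) = scaleR c ` rel_interior (normal_cone C xb)"
    by (rule rel_interior_injective_linear_image)
       (use assms in \<open>auto simp: bounded_linear_scaleR_right inj_on_def\<close>)
  then have eq: "rel_interior (normal_cone C xb) = scaleR c ` rel_interior (normal_cone C xb)"
    using cone_scale[OF assms(1), of C xb] by metis
  show ?thesis by (subst eq) (rule imageI[OF assms(2)])
qed

theorem theorem4p4: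
  fixes C :: "'a::euclidean_space set"
  assumes "compact C" and "convex C"
  shows "({T. T exposed_face_of polar_set C \<and> T \<noteq> {} \<and> T \<noteq> polar_set C}
           = {polar_face_at C xbar | xbar. xbar \<in> C \<and> polar_face_at C xbar \<noteq> {}})
         \<and> (\<forall>xbar\<in>C. polar_face_at C xbar \<noteq> {} \<longrightarrow>
           rel_interior (polar_face_at C xbar)
             = {y \<in> rel_interior (normal_cone C xbar). y \<bullet> xbar = 1})"
proof (intro conjI ballI impI)
  let ?P = "polar_set C"
  obtain R where R: "R > 0" "\<And>x. x \<in> C \<Longrightarrow> norm x \<le> R"
    using compact_imp_bounded[OF assms(1)] bounded_pos by blast
  have inP: "y \<in> ?P" if "norm y \<le> 1/R" for y
  proof -
    have "y \<bullet> x \<le> 1" if "x \<in> C" for x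
    proof -
      have "y \<bullet> x \<le> norm y * norm x" by (rule norm_cauchy_schwarz)
      also have "\<dots> \<le> (1/R) * R"
        using that \<open>norm y \<le> 1/R\<close> R by (intro mult_mono) auto
      finally show ?thesis using R by simp
    qed
    then show ?thesis by (auto simp: polar_set_def)
  qed
  show "{T. T exposed_face_of ?P \<and> T \<noteq> {} \<and> T \<noteq> ?P}
           = {polar_face_at C xbar | xbar. xbar \<in> C \<and> polar_face_at C xbar \<noteq> {}}"
  proof (intro set_eqI iffI)
    fix T assume "T \<in> {T. T exposed_face_of ?P \<and> T \<noteq> {} \<and> T \<noteq> ?P}"
    then have T: "T exposed_face_of ?P" "T \<noteq> {}" "T \<noteq> ?P" by auto
    then obtain a b where ab: "?P \<subseteq> {x. a \<bullet> x \<le> b}" "T = ?P \<inter> {x. a \<bullet> x = b}"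
      unfolding exposed_face_of_def by blast
    have "a \<noteq> 0"
    proof
      assume "a = 0"
      then show False using T ab by (cases "b = 0") auto
    qed
    define s where "s = 1 / (R * norm a)"
    have "norm (s *\<^sub>R a) \<le> 1/R" using \<open>a \<noteq> 0\<close> R by (simp add: s_def)
    then have "s *\<^sub>R a \<in> ?P" by (rule inP)
    then have "s * (a \<bullet> a) \<le> b" using ab(1) by auto
    moreover have "s * (a \<bullet> a) > 0" using \<open>a \<noteq> 0\<close> R by (simp add: s_def)
    ultimately have "b > 0" by linarith
    define a' where "a' = (1/b) *\<^sub>R a"
    have Pa: "a' \<bullet> y \<le> 1" if "y \<in> ?P" for y
      using ab(1) that \<open>b > 0\<close> by (auto simp: a'_def divide_simps)
    have Ta: "T = ?P \<inter> {y. a' \<bullet> y = 1}"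
      using ab(2) \<open>b > 0\<close> by (auto simp: a'_def divide_simps)
    obtain y0 where y0: "y0 \<in> T" using T by blast
    have y0P: "y0 \<in> ?P" and y0a: "a' \<bullet> y0 = 1" using y0 Ta by auto
    have "a' \<in> C"
    proof (rule ccontr)
      assume "a' \<notin> C"
      then obtain w \<beta> where wb: "w \<bullet> a' < \<beta>" "\<And>x. x \<in> C \<Longrightarrow> w \<bullet> x > \<beta>"
        using separating_hyperplane_closed_point[OF assms(2) compact_imp_closed[OF assms(1)]]
        by blast
      define e where "e = 1 / (\<bar>\<beta>\<bar> + 1)"
      have e: "e > 0" "1 + e * \<beta> \<ge> 0"
      proof -
        show "e > 0" by (simp add: e_def)
        have "e * \<bar>\<beta>\<bar> \<le> 1" by (simp add: e_def divide_simps)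
        moreover have "e * (- \<bar>\<beta>\<bar>) \<le> e * \<beta>"
          by (rule mult_left_mono) (use \<open>e > 0\<close> in auto)
        ultimately show "1 + e * \<beta> \<ge> 0" by linarith
      qed
      define y where "y = (1 + e * \<beta>) *\<^sub>R y0 - e *\<^sub>R w"
      have "y \<in> ?P"
      proof -
        have "y \<bullet> x \<le> 1" if x: "x \<in> C" for x
        proof -
          have "y0 \<bullet> x \<le> 1" using y0P x by (auto simp: polar_set_def)
          then have "(1 + e * \<beta>) * (y0 \<bullet> x) \<le> (1 + e * \<beta>)"
            using mult_left_mono[OF \<open>y0 \<bullet> x \<le> 1\<close> e(2)] by simp
          moreover have "e * (w \<bullet> x) \<ge> e * \<beta>" using wb(2)[OF x] e by simp
          ultimately show ?thesis by (simp add: y_def inner_diff_left)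
        qed
        then show ?thesis by (auto simp: polar_set_def)
      qed
      then have "a' \<bullet> y \<le> 1" by (rule Pa)
      moreover have "a' \<bullet> y = 1 + e * \<beta> - e * (w \<bullet> a')"
        using y0a by (simp add: y_def inner_diff_right inner_commute algebra_simps)
      moreover have "e * (w \<bullet> a') < e * \<beta>" using wb(1) e by simp
      ultimately show False by linarith
    qed
    have "T = polar_face_at C a'" using Ta face_eq[OF \<open>a' \<in> C\<close>] by simp
    then show "T \<in> {polar_face_at C xbar | xbar. xbar \<in> C \<and> polar_face_at C xbar \<noteq> {}}"
      using \<open>a' \<in> C\<close> T(2) by blast
  next
    fix T assume "T \<in> {polar_face_at C xbar | xbar. xbar \<in> C \<and> polar_face_at C xbar \<noteq> {}}"
    then obtain xb where xb: "xb \<in> C" "T = polar_face_at C xb" "T \<noteq> {}" by blast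
    have TP: "T = ?P \<inter> {y. xb \<bullet> y = 1}" using face_eq[OF xb(1)] xb(2) by simp
    have "T exposed_face_of ?P" unfolding TP
      by (rule exposed_face_of_Int_supporting_hyperplane_le[OF convex_polar])
         (use xb(1) in \<open>auto simp: polar_set_def inner_commute\<close>)
    moreover have "0 \<in> ?P" by (auto simp: polar_set_def)
    moreover have "0 \<notin> T" using TP by auto
    ultimately show "T \<in> {T. T exposed_face_of ?P \<and> T \<noteq> {} \<and> T \<noteq> ?P}"
      using xb(3) by auto
  qed
next
  fix xbar assume xC: "xbar \<in> C" and ne: "polar_face_at C xbar \<noteq> {}"
  let ?N = "normal_cone C xbar"
  let ?H = "{y. y \<bullet> xbar = 1}"
  have FNH: "polar_face_at C xbar = ?N \<inter> ?H" by (auto simp: polar_face_at_def)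
  obtain y where y: "y \<in> ?N" "y \<bullet> xbar = 1" using ne by (auto simp: polar_face_at_def)
  have "rel_interior ?N \<noteq> {}"
    using y(1) rel_interior_eq_empty[OF convex_normal_cone] by auto
  then obtain z where z: "z \<in> rel_interior ?N" by blast
  define c where "c = z \<bullet> xbar"
  define e where "e = 1 / (2 * (1 + \<bar>c\<bar>))"
  have e: "e > 0" "e \<le> 1" by (auto simp: e_def divide_simps)
  have w: "y - e *\<^sub>R (y - z) \<in> rel_interior ?N"
    by (rule rel_interior_closure_convex_shrink[OF convex_normal_cone z])
       (use y e closure_subset in auto)
  have val: "(y - e *\<^sub>R (y - z)) \<bullet> xbar = 1 - e * (1 - c)"
    using y(2) by (simp add: c_def inner_diff_left)
  have "e * (1 - c) \<le> 1/2"
  proof -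
    have "1 - c \<le> 1 + \<bar>c\<bar>" by linarith
    then have "e * (1 - c) \<le> e * (1 + \<bar>c\<bar>)" using e by (simp add: mult_left_mono)
    also have "\<dots> = 1/2" by (simp add: e_def divide_simps)
    finally show ?thesis .
  qed
  then have vpos: "1 - e * (1 - c) > 0" by linarith
  define v where "v = 1 - e * (1 - c)"
  have "(1/v) *\<^sub>R (y - e *\<^sub>R (y - z)) \<in> rel_interior ?N"
    by (rule relint_scale) (use vpos w v_def in auto)
  moreover have "((1/v) *\<^sub>R (y - e *\<^sub>R (y - z))) \<bullet> xbar = 1"
    using val vpos v_def by simp
  ultimately have ne2: "rel_interior ?N \<inter> ?H \<noteq> {}" by blast
  have aff: "affine ?H"
    using affine_hyperplane[of xbar 1] by (simp add: inner_commute)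
  have "rel_interior (?N \<inter> ?H) = rel_interior ?N \<inter> ?H"
    by (rule convex_affine_rel_interior_Int[OF convex_normal_cone aff ne2])
  then show "rel_interior (polar_face_at C xbar)
             = {y \<in> rel_interior (normal_cone C xbar). y \<bullet> xbar = 1}"
    using FNH by auto
qed

end
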